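(* Let $B\in\mathbb R^{n\times m}$, $f:\mathbb R^m\to\mathbb R$, $h:\mathbb R^n\to\mathbb R$ differentiable, and $\mathcal I_{\mathcal V}$, $\mathcal I_{\mathcal Q}$ symmetric positive definite. Let $e(u)=u-\mathcal I_{\mathcal V}^{-1}\nabla f(u)$, $h_B(p)=h(p)+\frac12(B\mathcal I_{\mathcal V}^{-1}B^\top p,p)$, $\mathcal G^u(u,p)=-\mathcal I_{\mathcal V}^{-1}(\nabla f(u)+B^\top p)$, $\mathcal G^p(u,p)=-\mathcal I_{\mathcal Q}^{-1}(\nabla h_B(p)-Be(u))$. Assume $\nabla f$ and $\nabla h_B$ are Lipschitz continuous with constants $L_{f,\mathcal I_{\mathcal V}}$ and $L_{h_B,\mathcal I_{\mathcal Q}}$, i.e. $\|\nabla f(u_1)-\nabla f(u_2)\|_{\mathcal I_{\mathcal V}^{-1}}\le L_{f,\mathcal I_{\mathcal V}}\|u_1-u_2\|_{\mathcal I_{\mathcal V}}$ and $\|\nabla h_B(p_1)-\nabla h_B(p_2)\|_{\mathcal I_{\mathcal Q}^{-1}}\le L_{h_B,\mathcal I_{\mathcal Q}}\|p_1-p_2\|_{\mathcal I_{\mathcal Q}}$, and let $L_{e,\mathcal I_{\mathcal V}}$ be the Lipschitz constant of $e$ with respect to $\|\cdot\|_{\mathcal I_{\mathcal V}}$. Then for all $u_1,u_2\in\mathbb R^m$, $p_1,p_2\in\mathbb R^n$, with $v_i=u_i+\mathcal I_{\mathcal V}^{-1}B^\top p_i$, $$\|\mathcal G^u(u_1,p_1)-\mathcal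 G^u(u_2,p_2)\|_{\mathcal I_{\mathcal V}}\le L_{e,\mathcal I_{\mathcal V}}\|u_1-u_2\|_{\mathcal I_{\mathcal V}}+\|v_1-v_2\|_{\mathcal I_{\mathcal V}},$$ $$\|\mathcal G^p(u_1,p_1)-\mathcal G^p(u_2,p_2)\|_{\mathcal I_{\mathcal Q}}\le L_{e,\mathcal I_{\mathcal V}}L_S\|u_1-u_2\|_{\mathcal I_{\mathcal V}}+L_{h_B,\mathcal I_{\mathcal Q}}\|p_1-p_2\|_{\mathcal I_{\mathcal Q}},$$ where $L_S^2=\lambda_{\max}(\mathcal I_{\mathcal Q}^{-1}B\mathcal I_{\mathcal V}^{-1}B^\top)$.
   Context: For SPD $M$, $\|x\|_M=(Mx,x)^{1/2}$. *)

theory Defs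
  imports "HOL-Analysis.Analysis"
begin

definition spd :: "real^'n^'n \<Rightarrow> bool" where
  "spd M \<longleftrightarrow> transpose M = M \<and> (\<forall>x. x \<noteq> 0 \<longrightarrow> (M *v x) \<bullet> x > 0)"

definition mnorm :: "real^'n^'n \<Rightarrow> real^'n \<Rightarrow> real" where
  "mnorm M x = sqrt ((M *v x) \<bullet> x)"

definition grad :: "(real^'n \<Rightarrow> real) \<Rightarrow> real^'n \<Rightarrow> real^'n" where
  "grad f x = (SOME g. (f has_derivative (\<lambda>h. g \<bullet> h)) (at x))"

definition real_eigenvalue :: "real^'n^'n \<Rightarrow> real \<Rightarrow> bool" where
  "real_eigenvalue A l \<longleftrightarrow> (\<exists>v. v \<noteq> 0 \<and> A *v v = l *\<^sub>R v)"

definition lambda_max :: "real^'n^'n \<Rightarrow> real" where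
  "lambda_max A = Max {l. real_eigenvalue A l}"

end

theory Submission
  imports Defs
begin


lemma inner_mv_transpose: "((A::real^'n^'m) *v x) \<bullet> y = x \<bullet> (transpose A *v y)"
  by (metis dot_lmul_matrix inner_commute transpose_matrix_vector)

lemma sym_inner: "transpose A = A \<Longrightarrow> ((A::real^'n^'n) *v x) \<bullet> y = (A *v y) \<bullet> x"
  by (metis inner_mv_transpose inner_commute)

lemma quad_disc:
  fixes a b c :: real
  assumes "\<And>t. 0 \<le> a + 2*b*t + c*t^2"
  shows "b^2 \<le> a*c"
proof (cases "c = 0")
  case True
  have "b = 0"
  proof (rule ccontr)
    assume "b \<noteq> 0"
    have "0 \<le> a + 2*b*(-(a+1)/(2*b)) + c*(-(a+1)/(2*b))^2" by (rule assms)
    with True \<open>b\<noteq>0\<close> show False by (simp add: field_simps)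
  qed
  with True show ?thesis by simp
next
  case False
  have c0: "0 \<le> c" proof (rule ccontr)
    assume "\<not> 0 \<le> c"
    hence cn: "c < 0" by simp
    define r where "r = sqrt ((\<bar>a\<bar> + 1) / (-c))"
    have s2: "r^2 = (\<bar>a\<bar> + 1) / (-c)" unfolding r_def using cn
      by (simp add: divide_nonneg_neg)
    have cs: "c * r^2 = -(\<bar>a\<bar> + 1)" using cn by (simp add: s2 field_simps)
    have "0 \<le> a + 2*b*r + c*r^2" by (rule assms)
    moreover have "0 \<le> a + 2*b*(-r) + c*(-r)^2" by (rule assms)
    ultimately show False using cs by simp
  qed
  with False have cp: "c > 0" by simp
  have "0 \<le> a + 2*b*(-b/c) + c*(-b/c)^2" by (rule assms)
  also have "\<dots> = a - b^2/c" using cp by (simp add: field_simps power2_eq_square)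
  finally show ?thesis using cp by (simp add: field_simps)
qed

lemma psd_cs:
  fixes S :: "real^'n^'n"
  assumes sym: "\<And>x y. (S *v x) \<bullet> y = (S *v y) \<bullet> x" and psd: "\<And>z. 0 \<le> (S *v z) \<bullet> z"
  shows "((S *v x) \<bullet> y)^2 \<le> ((S *v x) \<bullet> x) * ((S *v y) \<bullet> y)"
proof -
  have "0 \<le> (S *v x) \<bullet> x + 2*((S *v x) \<bullet> y)*t + ((S *v y) \<bullet> y)*t^2" for t
  proof -
    have "0 \<le> (S *v (x + t *\<^sub>R y)) \<bullet> (x + t *\<^sub>R y)" by (rule psd)
    also have "\<dots> = (S *v x) \<bullet> x + t*((S *v x) \<bullet> y) + t*((S *v y) \<bullet> x) + t*t*((S *v y) \<bullet> y)"
      by (simp add: algebra_simps matrix_vector_mult_scaleR inner_add_left inner_add_right)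
    also have "\<dots> = (S *v x) \<bullet> x + 2*((S *v x) \<bullet> y)*t + ((S *v y) \<bullet> y)*t^2"
      using sym[of y x] by (simp add: power2_eq_square algebra_simps)
    finally show ?thesis .
  qed
  thus ?thesis by (rule quad_disc)
qed

lemma spd_nonneg: "spd M \<Longrightarrow> 0 \<le> (M *v z) \<bullet> z"
  unfolding spd_def by (cases "z = 0") (auto intro: less_imp_le)

lemma mnorm_nonneg: "spd M \<Longrightarrow> 0 \<le> mnorm M x"
  unfolding mnorm_def by (simp add: spd_nonneg)

lemma mnorm_triangle:
  assumes "spd M"
  shows "mnorm M (x + y) \<le> mnorm M x + mnorm M y"
proof -
  have sym: "transpose M = M" using assms by (simp add: spd_def)
  define a where "a = (M *v x) \<bullet> x"
  define b where "b = (M *v x) \<bullet> y"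
  define c where "c = (M *v y) \<bullet> y"
  have a0: "0 \<le> a" and c0: "0 \<le> c" using spd_nonneg[OF assms] by (auto simp: a_def c_def)
  have cs: "b^2 \<le> a*c" unfolding a_def b_def c_def by (rule psd_cs[OF sym_inner[OF sym] spd_nonneg[OF assms]])
  have "b \<le> sqrt a * sqrt c"
    by (metis a0 c0 cs real_le_rsqrt real_sqrt_mult abs_le_D1 real_sqrt_abs real_sqrt_le_mono mult_nonneg_nonneg) 
  have e: "(M *v (x+y)) \<bullet> (x+y) = a + 2*b + c"
    using sym_inner[OF sym, of y x] by (simp add: a_def b_def c_def algebra_simps inner_add_left inner_add_right)
  have "a + 2*b + c \<le> (sqrt a + sqrt c)^2"
    using \<open>b \<le> sqrt a * sqrt c\<close> a0 c0 by (simp add: power2_eq_square algebra_simps)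
  hence "sqrt (a + 2*b + c) \<le> sqrt a + sqrt c"
    by (simp add: a0 c0 real_le_lsqrt real_sqrt_le_iff)
  thus ?thesis unfolding mnorm_def e a_def c_def by simp
qed

lemma mnorm_minus: "mnorm M (-x) = mnorm M x"
  proof -
  have "M *v (-x) = - (M *v x)" by (metis matrix_vector_mult_diff_distrib diff_0 matrix_vector_mult_0_right)
  thus ?thesis unfolding mnorm_def by simp
qed

lemma spd_invertible: "spd M \<Longrightarrow> invertible M"
proof -
  assume a: "spd M"
  have "\<forall>x. M *v x = 0 \<longrightarrow> x = 0" using a unfolding spd_def by (metis inner_zero_left less_irrefl)
  hence "\<exists>B. B ** M = mat 1" by (simp add: matrix_left_invertible_ker)
  thus ?thesis by (simp add: invertible_left_inverse)
qed

lemma spd_inv_facts: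
  assumes "spd M"
  shows "M ** matrix_inv M = mat 1" "matrix_inv M ** M = mat 1"
proof -
  have "\<exists>A'. M ** A' = mat 1 \<and> A' ** M = mat 1" using spd_invertible[OF assms] by (simp add: invertible_def)
  hence "M ** matrix_inv M = mat 1 \<and> matrix_inv M ** M = mat 1" unfolding matrix_inv_def by (rule someI_ex)
  thus "M ** matrix_inv M = mat 1" "matrix_inv M ** M = mat 1" by auto
qed

lemma spd_inv_apply:
  assumes "spd M"
  shows "M *v (matrix_inv M *v x) = x" "matrix_inv M *v (M *v x) = x"
  using spd_inv_facts[OF assms] by (simp_all add: matrix_vector_mul_assoc)

lemma spd_inv: assumes "spd M" shows "spd (matrix_inv M)"
proof -
  let ?N = "matrix_inv M"
  have sym: "transpose M = M" using assms by (simp add: spd_def)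
  have "transpose ?N ** M = mat 1"
    using arg_cong[OF spd_inv_facts(1)[OF assms], of transpose] by (simp add: matrix_transpose_mul sym)
  hence "transpose ?N = ?N"
    by (metis matrix_mul_assoc matrix_mul_lid matrix_mul_rid spd_inv_facts(1)[OF assms])
  moreover have "(?N *v x) \<bullet> x > 0" if "x \<noteq> 0" for x
  proof -
    have "?N *v x \<noteq> 0" using that spd_inv_apply(1)[OF assms, of x] by auto
    hence "(M *v (?N *v x)) \<bullet> (?N *v x) > 0" using assms by (simp add: spd_def)
    thus ?thesis by (simp add: spd_inv_apply(1)[OF assms] inner_commute)
  qed
  ultimately show ?thesis by (simp add: spd_def)
qed

lemma mnorm_inv: assumes "spd M" shows "mnorm M (matrix_inv M *v x) = mnorm (matrix_inv M) x"
  unfolding mnorm_def by (simp add: spd_inv_apply(1)[OF assms] inner_commute)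

lemma eig_indep:
  fixes A :: "real^'n^'n"
  assumes "finite S" "\<And>l. l \<in> S \<Longrightarrow> v l \<noteq> 0 \<and> A *v v l = l *\<^sub>R v l"
  shows "(\<Sum>l\<in>S. c l *\<^sub>R v l) = 0 \<Longrightarrow> \<forall>l\<in>S. c l = 0"
  using assms
proof (induction S arbitrary: c rule: finite_induct)
  case empty
  then show ?case by simp
next
  case (insert a S)
  have ev: "\<And>l. l \<in> S \<Longrightarrow> v l \<noteq> 0 \<and> A *v v l = l *\<^sub>R v l" using insert.prems by auto
  have va: "v a \<noteq> 0" "A *v v a = a *\<^sub>R v a" using insert.prems by auto
  have s0: "c a *\<^sub>R v a + (\<Sum>l\<in>S. c l *\<^sub>R v l) = 0" using insert by simp
  have "A *v (c a *\<^sub>R v a + (\<Sum>l\<in>S. c l *\<^sub>R v l)) = (c a * a) *\<^sub>R v a + (\<Sum>l\<in>S. (c l * l) *\<^sub>R v l)"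
    using va ev by (simp add: matrix_vector_right_distrib matrix_vector_mult_scaleR
        linear_sum[OF matrix_vector_mul_linear] o_def)
  hence e1: "(c a * a) *\<^sub>R v a + (\<Sum>l\<in>S. (c l * l) *\<^sub>R v l) = 0" using s0 by simp
  have e2: "(c a * a) *\<^sub>R v a + (\<Sum>l\<in>S. (c l * a) *\<^sub>R v l) = 0"
    using arg_cong[OF s0, of "\<lambda>z. a *\<^sub>R z"] by (simp add: scaleR_sum_right scaleR_add_right mult.commute)
  have "(\<Sum>l\<in>S. (c l * (l - a)) *\<^sub>R v l) = (\<Sum>l\<in>S. (c l * l) *\<^sub>R v l) - (\<Sum>l\<in>S. (c l * a) *\<^sub>R v l)"
    by (simp add: sum_subtractf[symmetric] algebra_simps)
  also have "\<dots> = 0"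
  proof -
    have "(\<Sum>l\<in>S. (c l * l) *\<^sub>R v l) = (\<Sum>l\<in>S. (c l * a) *\<^sub>R v l)"
      using e1 e2 add_left_cancel by (metis (no_types, lifting))
    thus ?thesis by simp
  qed
  finally have z: "(\<Sum>l\<in>S. (c l * (l - a)) *\<^sub>R v l) = 0" .
  have "\<forall>l\<in>S. c l * (l - a) = 0" by (rule insert.IH[of "\<lambda>l. c l * (l - a)", OF z ev])
  hence cS: "\<forall>l\<in>S. c l = 0" using insert.hyps(2) by auto
  hence "c a *\<^sub>R v a = 0" using s0 by simp
  hence "c a = 0" using va by simp
  with cS show ?case by simp
qed

lemma eig_finite: "finite {l. real_eigenvalue (A::real^'n^'n) l}"
proof (rule ccontr)
  let ?E = "{l. real_eigenvalue A l}"
  assume "infinite ?E"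
  then obtain S where S: "finite S" "card S = DIM(real^'n) + 1" "S \<subseteq> ?E"
    using infinite_arbitrarily_large by blast
  define v where "v l = (SOME w. w \<noteq> 0 \<and> A *v w = l *\<^sub>R w)" for l
  have ev: "v l \<noteq> 0 \<and> A *v v l = l *\<^sub>R v l" if "l \<in> S" for l
  proof -
    have "\<exists>w. w \<noteq> 0 \<and> A *v w = l *\<^sub>R w" using S(3) that unfolding real_eigenvalue_def by auto
    thus ?thesis unfolding v_def by (rule someI_ex)
  qed
  have inj: "inj_on v S"
  proof (rule inj_onI)
    fix x y assume "x \<in> S" "y \<in> S" "v x = v y"
    hence "x *\<^sub>R v x = y *\<^sub>R v x" using ev by metis
    thus "x = y" using ev[OF \<open>x \<in> S\<close>] by (simp add: scaleR_cancel_right)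
  qed
  have "independent (v ` S)"
  proof
    assume "dependent (v ` S)"
    then obtain u where u: "\<exists>w\<in>v ` S. u w \<noteq> 0" "(\<Sum>w\<in>v ` S. u w *\<^sub>R w) = 0"
      using real_vector.dependent_finite[of "v ` S"] S(1) by auto
    have "(\<Sum>l\<in>S. (u (v l)) *\<^sub>R v l) = 0" using u(2) by (simp add: sum.reindex[OF inj])
    hence "\<forall>l\<in>S. u (v l) = 0" using eig_indep[OF S(1), of v A "\<lambda>l. u (v l)"] ev by blast
    with u(1) show False by auto
  qed
  hence "card (v ` S) \<le> DIM(real^'n)" using independent_bound by blast
  with S(2) card_image[OF inj] show False by simp
qed

lemma scaleR_mv: "((c::real) *\<^sub>R (M::real^'n^'m)) *v x = c *\<^sub>R (M *v x)"
  unfolding matrix_vector_mult_def by (simp add: vec_eq_iff sum_distrib_left mult.assoc)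



lemma key:
  fixes B :: "real^'m^'n" and IV :: "real^'m^'m" and IQ :: "real^'n^'n"
  assumes IV: "spd IV" and IQ: "spd IQ"
  shows "0 \<le> lambda_max (matrix_inv IQ ** B ** matrix_inv IV ** transpose B)
     \<and> (\<forall>w. mnorm IQ (matrix_inv IQ *v (B *v w))
          \<le> sqrt (lambda_max (matrix_inv IQ ** B ** matrix_inv IV ** transpose B)) * mnorm IV w)"
proof -
  define Qi where "Qi = matrix_inv IQ"
  define Vi where "Vi = matrix_inv IV"
  define A where "A = Qi ** B ** Vi ** transpose B"
  define Mm where "Mm = transpose B ** Qi ** B"
  define Qf where "Qf w = (Mm *v w) \<bullet> w" for w
  define Pf where "Pf w = (IV *v w) \<bullet> w" for w
  have Qi: "spd Qi" unfolding Qi_def by (rule spd_inv[OF IQ])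
  have symQi: "transpose Qi = Qi" using Qi by (simp add: spd_def)
  have symIV: "transpose IV = IV" using IV by (simp add: spd_def)
  have Mmv: "Mm *v w = transpose B *v (Qi *v (B *v w))" for w
    by (simp add: Mm_def matrix_vector_mul_assoc matrix_mul_assoc)
  have Mm_inner: "(Mm *v x) \<bullet> y = (Qi *v (B *v x)) \<bullet> (B *v y)" for x y
    by (simp only: Mmv inner_mv_transpose transpose_transpose)
  have Qf_alt: "Qf w = (Qi *v (B *v w)) \<bullet> (B *v w)" for w
    by (simp only: Qf_def Mm_inner)
  have Qf0: "0 \<le> Qf w" for w unfolding Qf_alt using spd_nonneg[OF Qi] .
  have Pfpos: "0 < Pf w" if "w \<noteq> 0" for w using IV that by (simp add: spd_def Pf_def)
  have symMm: "(Mm *v x) \<bullet> y = (Mm *v y) \<bullet> x" for x y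
    by (simp only: Mm_inner sym_inner[OF symQi])
  have Qfs: "Qf (c *\<^sub>R w) = c * c * Qf w" for c w
    by (simp add: Qf_def matrix_vector_mult_scaleR)
  have Pfs: "Pf (c *\<^sub>R w) = c * c * Pf w" for c w
    by (simp add: Pf_def matrix_vector_mult_scaleR)
  have nz: "\<forall>w\<in>sphere 0 1. (IV *v w) \<bullet> w \<noteq> 0"
  proof
    fix w :: "real^'m" assume "w \<in> sphere 0 1"
    hence "w \<noteq> 0" by auto
    thus "(IV *v w) \<bullet> w \<noteq> 0" using Pfpos[of w] by (simp add: Pf_def)
  qed
  have cont: "continuous_on (sphere 0 1) (\<lambda>w. Qf w / Pf w)"
    unfolding Qf_def Pf_def
    by (intro continuous_intros) (rule nz)
  obtain w0 where w0: "w0 \<in> sphere 0 1" "\<And>y. y \<in> sphere 0 1 \<Longrightarrow> Qf y / Pf y \<le> Qf w0 / Pf w0"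
    using continuous_attains_sup[OF compact_sphere _ cont] by (auto simp: sphere_eq_empty)
  define mu where "mu = Qf w0 / Pf w0"
  have w0nz: "w0 \<noteq> 0" using w0(1) by auto
  have mu0: "0 \<le> mu" unfolding mu_def using Qf0 Pfpos[OF w0nz] by simp
  have bound: "Qf w \<le> mu * Pf w" for w
  proof (cases "w = 0")
    case True thus ?thesis by (simp add: Qf_def Pf_def)
  next
    case False
    define y where "y = (1 / norm w) *\<^sub>R w"
    have "y \<in> sphere 0 1" using False by (simp add: y_def)
    hence "Qf y / Pf y \<le> mu" using w0(2) mu_def by simp
    moreover have "Qf y / Pf y = Qf w / Pf w" using False by (simp add: y_def Qfs Pfs)
    ultimately have "Qf w / Pf w \<le> mu" by simp
    thus ?thesis using Pfpos[OF False] by (simp add: field_simps)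
  qed
  define T where "T = mu *\<^sub>R IV - Mm"
  have Tv: "T *v x = mu *\<^sub>R (IV *v x) - Mm *v x" for x
    by (simp add: T_def matrix_vector_mult_diff_rdistrib scaleR_mv)
  have Tq: "(T *v x) \<bullet> x = mu * Pf x - Qf x" for x by (simp add: Tv Pf_def Qf_def inner_diff_left)
  have Tsym: "(T *v x) \<bullet> y = (T *v y) \<bullet> x" for x y
    using sym_inner[OF symIV, of x y] symMm[of x y] by (simp add: Tv inner_diff_left)
  have Tpsd: "0 \<le> (T *v z) \<bullet> z" for z using bound[of z] by (simp add: Tq)
  have Tw0: "(T *v w0) \<bullet> w0 = 0" using Pfpos[OF w0nz] by (simp add: Tq mu_def)
  have "((T *v w0) \<bullet> (T *v w0))^2 \<le> ((T *v w0) \<bullet> w0) * ((T *v (T *v w0)) \<bullet> (T *v w0))"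
    by (rule psd_cs[OF Tsym Tpsd])
  hence "T *v w0 = 0" using Tw0 by simp
  hence eig0: "Mm *v w0 = mu *\<^sub>R (IV *v w0)" by (simp add: Tv)
  have muE: "real_eigenvalue A mu"
  proof (cases "mu = 0")
    case False
    define y where "y = Qi *v (B *v w0)"
    have "Qf w0 = mu * Pf w0" using Pfpos[OF w0nz] by (simp add: mu_def)
    hence "Qf w0 > 0" using False mu0 Pfpos[OF w0nz] by simp
    hence ynz: "y \<noteq> 0" by (auto simp: Qf_alt y_def)
    have "A *v y = Qi *v (B *v (Vi *v (Mm *v w0)))"
      by (simp add: A_def y_def Mmv flip: matrix_vector_mul_assoc)
    also have "\<dots> = mu *\<^sub>R y"
      by (simp add: eig0 matrix_vector_mult_scaleR y_def Vi_def spd_inv_apply(2)[OF IV])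
    finally show ?thesis using ynz unfolding real_eigenvalue_def by blast
  next
    case True
    have "Qf w = 0" for w using bound[of w] Qf0[of w] True by simp
    hence Qz: "(Qi *v (B *v w)) \<bullet> (B *v w) = 0" for w by (simp add: Qf_alt)
    have Bz: "B *v w = 0" for w
    proof (rule ccontr)
      assume "B *v w \<noteq> 0"
      hence "(Qi *v (B *v w)) \<bullet> (B *v w) > 0" using Qi by (simp add: spd_def)
      with Qz[of w] show False by simp
    qed
    define z :: "real^'n" where "z = 1"
    have "z \<noteq> 0" by (simp add: z_def vec_eq_iff)
    moreover have "A *v z = 0 *\<^sub>R z" by (simp add: A_def Bz flip: matrix_vector_mul_assoc)
    ultimately show ?thesis using True unfolding real_eigenvalue_def by blast
  qed
  have muL: "mu \<le> lambda_max A" unfolding lambda_max_def using muE eig_finite by (auto intro: Max_ge)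
  have "mnorm IQ (Qi *v (B *v w)) \<le> sqrt (lambda_max A) * mnorm IV w" for w
  proof -
    have "mnorm IQ (Qi *v (B *v w)) = sqrt (Qf w)"
      unfolding Qi_def mnorm_inv[OF IQ] by (simp add: mnorm_def Qf_alt Qi_def)
    also have "\<dots> \<le> sqrt (lambda_max A * Pf w)"
      using bound[of w] muL mult_right_mono[OF muL, of "Pf w"] spd_nonneg[OF IV, of w]
      by (simp add: Pf_def)
    also have "\<dots> = sqrt (lambda_max A) * mnorm IV w" by (simp add: mnorm_def Pf_def real_sqrt_mult)
    finally show ?thesis .
  qed
  thus ?thesis using mu0 muL by (simp add: A_def Qi_def Vi_def)
qed


theorem lemma3p3:
  fixes B :: "real^'m^'n"
    and f :: "real^'m \<Rightarrow> real" and h :: "real^'n \<Rightarrow> real"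
    and IV :: "real^'m^'m" and IQ :: "real^'n^'n"
    and e :: "real^'m \<Rightarrow> real^'m" and hB :: "real^'n \<Rightarrow> real"
    and Gu :: "real^'m \<Rightarrow> real^'n \<Rightarrow> real^'m"
    and Gp :: "real^'m \<Rightarrow> real^'n \<Rightarrow> real^'n"
    and Lf LhB Le LS :: real
  assumes f_diff: "\<And>u. f differentiable (at u)"
    and h_diff: "\<And>p. h differentiable (at p)"
    and IV_spd: "spd IV" and IQ_spd: "spd IQ"
    and e_def: "\<And>u. e u = u - matrix_inv IV *v grad f u"
    and hB_def: "\<And>p. hB p = h p + 1/2 * (((B ** matrix_inv IV ** transpose B) *v p) \<bullet> p)"
    and Gu_def: "\<And>u p. Gu u p = - (matrix_inv IV *v (grad f u + transpose B *v p))"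
    and Gp_def: "\<And>u p. Gp u p = - (matrix_inv IQ *v (grad hB p - B *v e u))"
    and f_lip: "\<And>u1 u2. mnorm (matrix_inv IV) (grad f u1 - grad f u2) \<le> Lf * mnorm IV (u1 - u2)"
    and hB_lip: "\<And>p1 p2. mnorm (matrix_inv IQ) (grad hB p1 - grad hB p2) \<le> LhB * mnorm IQ (p1 - p2)"
    and e_lip: "\<And>u1 u2. mnorm IV (e u1 - e u2) \<le> Le * mnorm IV (u1 - u2)"
    and LS_def: "LS = sqrt (lambda_max (matrix_inv IQ ** B ** matrix_inv IV ** transpose B))"
  shows "\<forall>u1 u2 p1 p2.
           let v1 = u1 + matrix_inv IV *v (transpose B *v p1);
               v2 = u2 + matrix_inv IV *v (transpose B *v p2)
           in mnorm IV (Gu u1 p1 - Gu u2 p2) \<le> Le * mnorm IV (u1 - u2) + mnorm IV (v1 - v2)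
            \<and> mnorm IQ (Gp u1 p1 - Gp u2 p2) \<le> Le * LS * mnorm IV (u1 - u2) + LhB * mnorm IQ (p1 - p2)"
  proof (intro allI)
  fix u1 u2 :: "real^'m" and p1 p2 :: "real^'n"
  define v1 where "v1 = u1 + matrix_inv IV *v (transpose B *v p1)"
  define v2 where "v2 = u2 + matrix_inv IV *v (transpose B *v p2)"
  have keyf: "0 \<le> LS" "\<And>w. mnorm IQ (matrix_inv IQ *v (B *v w)) \<le> LS * mnorm IV w"
    using key[OF IV_spd IQ_spd, of B] LS_def by auto
  have Gu_alt: "Gu u p = e u - (u + matrix_inv IV *v (transpose B *v p))" for u p
    by (simp add: Gu_def e_def matrix_vector_right_distrib)
  have "Gu u1 p1 - Gu u2 p2 = (e u1 - e u2) + - (v1 - v2)"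
    by (simp add: Gu_alt v1_def v2_def)
  hence A1: "mnorm IV (Gu u1 p1 - Gu u2 p2) \<le> Le * mnorm IV (u1 - u2) + mnorm IV (v1 - v2)"
    using mnorm_triangle[OF IV_spd, of "e u1 - e u2" "- (v1 - v2)"] mnorm_minus[of IV "v1 - v2"] e_lip[of u1 u2]
    by simp
  let ?Qi = "matrix_inv IQ"
  have "Gp u1 p1 - Gp u2 p2 = - (?Qi *v (grad hB p1 - grad hB p2)) + ?Qi *v (B *v (e u1 - e u2))"
    by (simp add: Gp_def matrix_vector_mult_diff_distrib algebra_simps)
  hence "mnorm IQ (Gp u1 p1 - Gp u2 p2) \<le> mnorm IQ (?Qi *v (grad hB p1 - grad hB p2)) + mnorm IQ (?Qi *v (B *v (e u1 - e u2)))"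
    using mnorm_triangle[OF IQ_spd] mnorm_minus by metis
  also have "\<dots> \<le> LhB * mnorm IQ (p1 - p2) + LS * (Le * mnorm IV (u1 - u2))"
  proof (rule add_mono)
    show "mnorm IQ (?Qi *v (grad hB p1 - grad hB p2)) \<le> LhB * mnorm IQ (p1 - p2)"
      using hB_lip[of p1 p2] mnorm_inv[OF IQ_spd] by simp
    show "mnorm IQ (?Qi *v (B *v (e u1 - e u2))) \<le> LS * (Le * mnorm IV (u1 - u2))"
      using keyf(2)[of "e u1 - e u2"] mult_left_mono[OF e_lip[of u1 u2] keyf(1)] by linarith
  qed
  finally have A2: "mnorm IQ (Gp u1 p1 - Gp u2 p2) \<le> Le * LS * mnorm IV (u1 - u2) + LhB * mnorm IQ (p1 - p2)"
    by (simp add: algebra_simps)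
  show "let v1 = u1 + matrix_inv IV *v (transpose B *v p1);
               v2 = u2 + matrix_inv IV *v (transpose B *v p2)
           in mnorm IV (Gu u1 p1 - Gu u2 p2) \<le> Le * mnorm IV (u1 - u2) + mnorm IV (v1 - v2)
            \<and> mnorm IQ (Gp u1 p1 - Gp u2 p2) \<le> Le * LS * mnorm IV (u1 - u2) + LhB * mnorm IQ (p1 - p2)"
    using A1 A2 by (simp add: v1_def v2_def Let_def)
qed

end
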